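(* Let $(\mathcal{P},\cdot)$ be a finite-dimensional admissible Poisson algebra. Its nilradical $\mathcal{N}(\mathcal{P})$ (the unique maximal two-sided ideal of $(\mathcal{P},\cdot)$ consisting of nilpotent elements) coincides with the largest Lie ideal of $\mathfrak{g}_{\mathcal{P}}$ contained in the Jacobson radical $\mathcal{J}(\mathcal{A}_{\mathcal{P}})$ of the commutative associative algebra $\mathcal{A}_{\mathcal{P}}$.
   Context: $\mathbb{K}$ is a field of characteristic different from $2$ and $3$. Associator: $A(X,Y,Z)=(X\cdot Y)\cdot Z-X\cdot(Y\cdot Z)$. An admissible Poisson algebra is a $\mathbb{K}$-vector space $\mathcal{P}$ with a bilinear product $\cdot$ satisfying $3A(X,Y,Z)=(X\cdot Z)\cdot Y+(Y\cdot Z)\cdot X-(Y\cdot X)\cdot Z-(Z\cdot X)\cdot Y$ for all $X,Y,Z$. Its bracket $\{X,Y\}=\frac12(X\cdot Y-Y\cdot X)$ is a Lie bracket and its symmetrized product $X\bullet Y=\frac12(X\cdot Y+Y\cdot X)$ is commutative and associative; $\mathfrak{g}_{\mathcal{P}}=(\mathcal{P},\{\,,\,\})$, $\mathcal{A}_{\mathcal{P}}=(\mathcal{P},\bullet)$. Powers: $X^1=X$, $X^{i+1}=X\cdot X^i$; $X$ is nilpotent if $X^r=0$ for some $r$. *)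

theory Defs
  imports Complex_Main
begin

text \<open>An algebra over a field 'k is modelled as a type 'v with an additive group
structure, a scalar multiplication scale, and a bilinear product mult.\<close>

definition bilinear_prod :: "('k::field \<Rightarrow> 'v::ab_group_add \<Rightarrow> 'v) \<Rightarrow> ('v \<Rightarrow> 'v \<Rightarrow> 'v) \<Rightarrow> bool" where
  "bilinear_prod scale mult \<longleftrightarrow>
     (\<forall>x. Vector_Spaces.linear scale scale (mult x)) \<and>
     (\<forall>y. Vector_Spaces.linear scale scale (\<lambda>x. mult x y))"

definition fin_dim :: "('k::field \<Rightarrow> 'v::ab_group_add \<Rightarrow> 'v) \<Rightarrow> bool" where
  "fin_dim scale \<longleftrightarrow> (\<exists>B. finite B \<and> module.span scale B = UNIV)"

definition assoc :: "('v::ab_group_add \<Rightarrow> 'v \<Rightarrow> 'v) \<Rightarrow> 'v \<Rightarrow> 'v \<Rightarrow> 'v \<Rightarrow> 'v" where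
  "assoc mult x y z = mult (mult x y) z - mult x (mult y z)"

definition admissible_poisson :: "('k::field \<Rightarrow> 'v::ab_group_add \<Rightarrow> 'v) \<Rightarrow> ('v \<Rightarrow> 'v \<Rightarrow> 'v) \<Rightarrow> bool" where
  "admissible_poisson scale mult \<longleftrightarrow>
     (\<forall>x y z. scale 3 (assoc mult x y z) =
        mult (mult x z) y + mult (mult y z) x - mult (mult y x) z - mult (mult z x) y)"

definition pbracket :: "('k::field \<Rightarrow> 'v::ab_group_add \<Rightarrow> 'v) \<Rightarrow> ('v \<Rightarrow> 'v \<Rightarrow> 'v) \<Rightarrow> 'v \<Rightarrow> 'v \<Rightarrow> 'v" where
  "pbracket scale mult x y = scale (1/2) (mult x y - mult y x)"

definition sprod :: "('k::field \<Rightarrow> 'v::ab_group_add \<Rightarrow> 'v) \<Rightarrow> ('v \<Rightarrow> 'v \<Rightarrow> 'v) \<Rightarrow> 'v \<Rightarrow> 'v \<Rightarrow> 'v" where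
  "sprod scale mult x y = scale (1/2) (mult x y + mult y x)"

text \<open>Powers: lpow mult x n = X^(n+1), with X^1 = X and X^(i+1) = X \<cdot> X^i.\<close>
fun lpow :: "('v \<Rightarrow> 'v \<Rightarrow> 'v) \<Rightarrow> 'v \<Rightarrow> nat \<Rightarrow> 'v" where
  "lpow mult x 0 = x"
| "lpow mult x (Suc n) = mult x (lpow mult x n)"

definition nilpotent_elem :: "('v::zero \<Rightarrow> 'v \<Rightarrow> 'v) \<Rightarrow> 'v \<Rightarrow> bool" where
  "nilpotent_elem mult x \<longleftrightarrow> (\<exists>n. lpow mult x n = 0)"

definition two_sided_ideal :: "('k::field \<Rightarrow> 'v::ab_group_add \<Rightarrow> 'v) \<Rightarrow> ('v \<Rightarrow> 'v \<Rightarrow> 'v) \<Rightarrow> 'v set \<Rightarrow> bool" where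
  "two_sided_ideal scale m I \<longleftrightarrow> module.subspace scale I \<and>
     (\<forall>x. \<forall>a\<in>I. m x a \<in> I \<and> m a x \<in> I)"

definition nil_ideal :: "('k::field \<Rightarrow> 'v::ab_group_add \<Rightarrow> 'v) \<Rightarrow> ('v \<Rightarrow> 'v \<Rightarrow> 'v) \<Rightarrow> 'v set \<Rightarrow> bool" where
  "nil_ideal scale mult I \<longleftrightarrow> two_sided_ideal scale mult I \<and> (\<forall>a\<in>I. nilpotent_elem mult a)"

definition is_nilradical :: "('k::field \<Rightarrow> 'v::ab_group_add \<Rightarrow> 'v) \<Rightarrow> ('v \<Rightarrow> 'v \<Rightarrow> 'v) \<Rightarrow> 'v set \<Rightarrow> bool" where
  "is_nilradical scale mult N \<longleftrightarrow> nil_ideal scale mult N \<and>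
     (\<forall>I. nil_ideal scale mult I \<longrightarrow> I \<subseteq> N)"

text \<open>Jacobson radical of a commutative associative (possibly non-unital) algebra with
product p: the largest quasi-regular ideal, i.e. the union (= sum) of all ideals all of whose
elements are quasi-regular (y quasi-regular iff y + z - yz = 0 = y + z - zy for some z).\<close>
definition quasi_regular :: "('v::ab_group_add \<Rightarrow> 'v \<Rightarrow> 'v) \<Rightarrow> 'v \<Rightarrow> bool" where
  "quasi_regular p y \<longleftrightarrow> (\<exists>z. y + z - p y z = 0 \<and> y + z - p z y = 0)"

definition jacobson_radical :: "('k::field \<Rightarrow> 'v::ab_group_add \<Rightarrow> 'v) \<Rightarrow> ('v \<Rightarrow> 'v \<Rightarrow> 'v) \<Rightarrow> 'v set" where
  "jacobson_radical scale p =
     \<Union>{I. two_sided_ideal scale p I \<and> (\<forall>y\<in>I. quasi_regular p y)}"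

definition lie_ideal :: "('k::field \<Rightarrow> 'v::ab_group_add \<Rightarrow> 'v) \<Rightarrow> ('v \<Rightarrow> 'v \<Rightarrow> 'v) \<Rightarrow> 'v set \<Rightarrow> bool" where
  "lie_ideal scale b I \<longleftrightarrow> module.subspace scale I \<and> (\<forall>x. \<forall>a\<in>I. b x a \<in> I)"

definition largest_lie_ideal_in :: "('k::field \<Rightarrow> 'v::ab_group_add \<Rightarrow> 'v) \<Rightarrow> ('v \<Rightarrow> 'v \<Rightarrow> 'v) \<Rightarrow> 'v set \<Rightarrow> 'v set \<Rightarrow> bool" where
  "largest_lie_ideal_in scale b J L \<longleftrightarrow> lie_ideal scale b L \<and> L \<subseteq> J \<and>
     (\<forall>I. lie_ideal scale b I \<and> I \<subseteq> J \<longrightarrow> I \<subseteq> L)"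

end

theory Submission imports Defs begin

lemma abel_assoc3:
  fixes m :: "'a::ab_group_add \<Rightarrow> 'a \<Rightarrow> 'a" and x y z :: 'a
  assumes H: "\<And>x y z. (m (m x y) z - m x (m y z)) + (m (m x y) z - m x (m y z)) + (m (m x y) z - m x (m y z))
     - (m (m x z) y + m (m y z) x - m (m y x) z - m (m z x) y) = 0"
  defines "T \<equiv> m (m x y) z + m (m y x) z + m z (m x y) + m z (m y x) - (m x (m y z) + m x (m z y) + m (m y z) x + m (m z y) x)"
  shows "T + T + T = 0"
proof -
  let ?D = "\<lambda>x y z. (m (m x y) z - m x (m y z)) + (m (m x y) z - m x (m y z)) + (m (m x y) z - m x (m y z))
     - (m (m x z) y + m (m y z) x - m (m y x) z - m (m z x) y)"
  have "T + T + T = ?D x y z + ?D x z y - ?D z x y - ?D z y x" unfolding T_def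
    by (simp add: algebra_simps)
  then show ?thesis using H by simp
qed

lemma abel_leib3:
  fixes m :: "'a::ab_group_add \<Rightarrow> 'a \<Rightarrow> 'a" and x y z :: 'a
  assumes H: "\<And>x y z. (m (m x y) z - m x (m y z)) + (m (m x y) z - m x (m y z)) + (m (m x y) z - m x (m y z))
     - (m (m x z) y + m (m y z) x - m (m y x) z - m (m z x) y) = 0"
  defines "T \<equiv> m x (m y z) + m x (m z y) - m (m y z) x - m (m z y) x
   - ((m (m x y) z - m (m y x) z + m z (m x y) - m z (m y x)) + (m y (m x z) - m y (m z x) + m (m x z) y - m (m z x) y))"
  shows "T + T + T = 0"
proof -
  let ?D = "\<lambda>x y z. (m (m x y) z - m x (m y z)) + (m (m x y) z - m x (m y z)) + (m (m x y) z - m x (m y z))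
     - (m (m x z) y + m (m y z) x - m (m y x) z - m (m z x) y)"
  have "T + T + T = - ?D x y z - ?D x z y + ?D y x z - ?D y z x + ?D z x y - ?D z y x" unfolding T_def
    by (simp add: algebra_simps)
  then show ?thesis using H by simp
qed

locale apa = vector_space scale for scale :: "'k::field \<Rightarrow> 'v::ab_group_add \<Rightarrow> 'v" +
  fixes mult :: "'v \<Rightarrow> 'v \<Rightarrow> 'v"
  assumes char2: "(2::'k) \<noteq> 0" and char3: "(3::'k) \<noteq> 0"
    and fd: "fin_dim scale"
    and bil: "bilinear_prod scale mult"
    and adm: "admissible_poisson scale mult"
begin

abbreviation sp where "sp \<equiv> sprod scale mult"
abbreviation br where "br \<equiv> pbracket scale mult"

lemma mhR: "module_hom scale scale (mult x)"
  using bil by (simp add: bilinear_prod_def module_hom_iff_linear)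
lemma mhL: "module_hom scale scale (\<lambda>a. mult a y)"
  using bil by (simp add: bilinear_prod_def module_hom_iff_linear)

lemma mult_simps:
  "mult x (a + b) = mult x a + mult x b"
  "mult x (scale c a) = scale c (mult x a)"
  "mult x 0 = 0" "mult x (- a) = - mult x a" "mult x (a - b) = mult x a - mult x b"
  "mult (a + b) y = mult a y + mult b y"
  "mult (scale c a) y = scale c (mult a y)"
  "mult 0 y = 0" "mult (- a) y = - mult a y" "mult (a - b) y = mult a y - mult b y"
  using module_hom.add[OF mhR] module_hom.scale[OF mhR] module_hom.zero[OF mhR]
    module_hom.neg[OF mhR] module_hom.diff[OF mhR]
    module_hom.add[OF mhL] module_hom.scale[OF mhL] module_hom.zero[OF mhL]
    module_hom.neg[OF mhL] module_hom.diff[OF mhL] by auto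

lemma mult_sumR: "mult x (sum f A) = (\<Sum>a\<in>A. mult x (f a))"
  by (rule module_hom.sum[OF mhR])

lemma scale3: "scale 3 v = v + v + v"
proof -
  have e: "(3::'k) = 1+1+1" by simp
  show ?thesis by (subst e) (simp only: scale_left_distrib scale_one)
qed

lemma scale2: "scale 2 v = v + v"
proof -
  have e: "(2::'k) = 1+1" by simp
  show ?thesis by (subst e) (simp only: scale_left_distrib scale_one)
qed

lemma three_zero: fixes v :: 'v assumes h: "v + v + v = 0" shows "v = 0"
proof -
  have "scale 3 v = 0" using h by (simp only: scale3)
  then show "v = 0" using char3 by simp
qed

lemma H: "(mult (mult x y) z - mult x (mult y z)) + (mult (mult x y) z - mult x (mult y z)) + (mult (mult x y) z - mult x (mult y z))
     - (mult (mult x z) y + mult (mult y z) x - mult (mult y x) z - mult (mult z x) y) = 0"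
  using adm unfolding admissible_poisson_def assoc_def by (simp add: scale3)

lemmas vsimps = mult_simps scale_right_distrib scale_right_diff_distrib

lemma sp_comm: "sp x y = sp y x"
  by (simp add: sprod_def add.commute)

lemma br_anti: "br x y = - br y x"
  by (simp add: pbracket_def flip: scale_minus_right)

lemma br_self: "br x x = 0"
  by (simp add: pbracket_def)

lemma mult_decomp: "mult x y = sp x y + br x y"
proof -
  have "sp x y + br x y = scale (1/2) (mult x y + mult y x + (mult x y - mult y x))"
    by (simp only: sprod_def pbracket_def scale_right_distrib[symmetric])
  also have "\<dots> = scale (1/2) (scale 2 (mult x y))" by (simp add: scale2 algebra_simps)
  also have "\<dots> = mult x y" using char2 by simp
  finally show ?thesis by simp
qed

lemma sp_assoc: "sp (sp x y) z = sp x (sp y z)"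
proof -
  let ?P = "mult (mult x y) z + mult (mult y x) z + mult z (mult x y) + mult z (mult y x)"
  let ?Q = "mult x (mult y z) + mult x (mult z y) + mult (mult y z) x + mult (mult z y) x"
  have T: "?P - ?Q = 0" by (rule three_zero, rule abel_assoc3, rule H)
  have 1: "sp (sp x y) z = scale (1/4) ?P" by (simp add: sprod_def vsimps)
  have 2: "sp x (sp y z) = scale (1/4) ?Q" by (simp add: sprod_def vsimps add_ac)
  show ?thesis using T 1 2 by simp
qed

lemma leibniz: "br x (sp y z) = sp (br x y) z + sp y (br x z)"
proof -
  let ?P = "mult x (mult y z) + mult x (mult z y) - mult (mult y z) x - mult (mult z y) x"
  let ?Q = "(mult (mult x y) z - mult (mult y x) z + mult z (mult x y) - mult z (mult y x)) + (mult y (mult x z) - mult y (mult z x) + mult (mult x z) y - mult (mult z x) y)"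
  have T: "?P - ?Q = 0" by (rule three_zero, rule abel_leib3, rule H)
  have 1: "br x (sp y z) = scale (1/4) ?P" by (simp add: sprod_def pbracket_def vsimps)
  have 2: "sp (br x y) z + sp y (br x z) = scale (1/4) ?Q" by (simp add: sprod_def pbracket_def vsimps add_ac)
  show ?thesis using T 1 2 by simp
qed


lemma mh_sp: "module_hom scale scale (sp x)"
  by unfold_locales (simp_all add: sprod_def vsimps algebra_simps)
lemma mh_br: "module_hom scale scale (br x)"
  by unfold_locales (simp_all add: pbracket_def vsimps algebra_simps)

lemma sp_simps:
  "sp x (a + b) = sp x a + sp x b"
  "sp x (scale c a) = scale c (sp x a)"
  "sp x 0 = 0" "sp x (- a) = - sp x a" "sp x (a - b) = sp x a - sp x b"
  "sp (a + b) x = sp a x + sp b x"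
  "sp (scale c a) x = scale c (sp a x)"
  "sp 0 x = 0" "sp (- a) x = - sp a x" "sp (a - b) x = sp a x - sp b x"
  using module_hom.add[OF mh_sp] module_hom.scale[OF mh_sp] module_hom.zero[OF mh_sp]
    module_hom.neg[OF mh_sp] module_hom.diff[OF mh_sp] sp_comm by metis+

lemma pw_eq: "br y (lpow mult y n) = 0 \<and> lpow mult y n = lpow sp y n"
proof (induction n)
  case 0
  then show ?case by (simp add: br_self)
next
  case (Suc n)
  let ?p = "lpow mult y n"
  from Suc.IH have i1: "br y ?p = 0" and i2: "?p = lpow sp y n" by auto
  have 1: "lpow mult y (Suc n) = sp y ?p" using mult_decomp[of y ?p] i1 by simp
  have 2: "br y (sp y ?p) = 0" using i1 by (simp add: leibniz br_self sp_simps)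
  show ?case using 1 2 i2 by simp
qed

lemma pw_mul: "sp (lpow sp y i) (lpow sp y j) = lpow sp y (i + j + 1)"
proof (induction i)
  case 0
  then show ?case by simp
next
  case (Suc i)
  then show ?case by (simp add: sp_assoc)
qed

lemma nil_sum: "y + (- (\<Sum>k<n. lpow sp y k)) - sp y (- (\<Sum>k<n. lpow sp y k)) = lpow sp y n"
proof (induction n)
  case 0
  then show ?case by (simp add: sp_simps)
next
  case (Suc n)
  have "y + (- (\<Sum>k<Suc n. lpow sp y k)) - sp y (- (\<Sum>k<Suc n. lpow sp y k))
     = (y + (- (\<Sum>k<n. lpow sp y k)) - sp y (- (\<Sum>k<n. lpow sp y k))) - lpow sp y n + sp y (lpow sp y n)"
    by (simp add: sp_simps algebra_simps)
  also have "\<dots> = lpow sp y (Suc n)" using Suc by simp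
  finally show ?case .
qed

lemma nil_qr: "lpow sp y n = 0 \<Longrightarrow> quasi_regular sp y"
  unfolding quasi_regular_def
  by (rule exI[of _ "- (\<Sum>k<n. lpow sp y k)"]) (metis nil_sum sp_comm)

definition circ where "circ u v = u + v - sp u v"

lemma circ_assoc: "circ (circ u v) w = circ u (circ v w)"
  unfolding circ_def by (simp add: sp_simps sp_assoc algebra_simps)

abbreviation Jr where "Jr \<equiv> jacobson_radical scale sp"

definition qri where "qri I \<longleftrightarrow> two_sided_ideal scale sp I \<and> (\<forall>y\<in>I. quasi_regular sp y)"

lemma qri_sub: "qri I \<Longrightarrow> I \<subseteq> Jr"
  unfolding qri_def jacobson_radical_def by blast

lemma J_cases: "y \<in> Jr \<Longrightarrow> \<exists>I. qri I \<and> y \<in> I"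
  unfolding qri_def jacobson_radical_def by blast

lemma qr_circ: "quasi_regular sp y \<longleftrightarrow> (\<exists>z. circ y z = 0)"
  unfolding quasi_regular_def circ_def by (metis sp_comm)

lemma J_sum:
  assumes I1: "qri I1" and I2: "qri I2" and a: "a \<in> I1" and b: "b \<in> I2"
  shows "a + b \<in> Jr"
proof -
  let ?S = "{x + y |x y. x \<in> I1 \<and> y \<in> I2}"
  have s1: "subspace I1" and s2: "subspace I2" using I1 I2 by (auto simp: qri_def two_sided_ideal_def)
  have sub: "subspace ?S" by (rule subspace_sums[OF s1 s2])
  have id: "\<forall>x. \<forall>u\<in>?S. sp x u \<in> ?S \<and> sp u x \<in> ?S"
  proof (intro allI ballI)
    fix x u assume "u \<in> ?S"
    then obtain p q where u: "u = p + q" "p \<in> I1" "q \<in> I2" by blast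
    have "sp x p \<in> I1" "sp x q \<in> I2" using u I1 I2 by (auto simp: qri_def two_sided_ideal_def)
    then have "sp x u \<in> ?S" using u by (auto simp: sp_simps)
    then show "sp x u \<in> ?S \<and> sp u x \<in> ?S" by (simp add: sp_comm)
  qed
  have qr: "\<forall>u\<in>?S. quasi_regular sp u"
  proof
    fix u assume "u \<in> ?S"
    then obtain p q where u: "u = p + q" "p \<in> I1" "q \<in> I2" by blast
    obtain p' where p': "circ p p' = 0" using u I1 by (auto simp: qri_def qr_circ)
    let ?c = "q - sp q p'"
    have "?c \<in> I2" using u I2 s2 by (auto simp: qri_def two_sided_ideal_def intro!: subspace_diff)
    then obtain c' where c': "circ ?c c' = 0" using I2 by (auto simp: qri_def qr_circ)
    have "circ u p' = ?c" using p' u unfolding circ_def by (simp add: sp_simps algebra_simps)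
    then have "circ u (circ p' c') = 0" using c' by (simp add: circ_assoc[symmetric])
    then show "quasi_regular sp u" by (auto simp: qr_circ)
  qed
  have "qri ?S" using sub id qr by (simp add: qri_def two_sided_ideal_def)
  moreover have "a + b \<in> ?S" using a b by blast
  ultimately show ?thesis using qri_sub by blast
qed

lemma J_qri: "qri Jr"
proof -
  have z: "qri {0}"
    by (auto simp: qri_def two_sided_ideal_def sp_simps quasi_regular_def)
  have sub: "subspace Jr"
  proof (rule subspaceI)
    show "0 \<in> Jr" using qri_sub[OF z] by blast
    show "x + y \<in> Jr" if "x \<in> Jr" "y \<in> Jr" for x y
      using J_cases[OF that(1)] J_cases[OF that(2)] J_sum by blast
    show "scale c x \<in> Jr" if "x \<in> Jr" for c x
      using J_cases[OF that] qri_sub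
      by (meson qri_def subsetD subspace_scale two_sided_ideal_def)
  qed
  have id: "\<forall>x. \<forall>a\<in>Jr. sp x a \<in> Jr \<and> sp a x \<in> Jr"
    using J_cases qri_sub unfolding qri_def two_sided_ideal_def by blast
  have qr: "\<forall>y\<in>Jr. quasi_regular sp y"
    using J_cases unfolding qri_def by blast
  show ?thesis using sub id qr by (simp add: qri_def two_sided_ideal_def)
qed


lemma J_sub: "subspace Jr" and J_id: "\<And>x a. a \<in> Jr \<Longrightarrow> sp x a \<in> Jr"
  and J_qr: "\<And>y. y \<in> Jr \<Longrightarrow> quasi_regular sp y"
  using J_qri unfolding qri_def two_sided_ideal_def by auto

lemma pw_in: "y \<in> Jr \<Longrightarrow> lpow sp y j \<in> Jr"
  by (induction j) (auto intro: J_id)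

lemma fin_nil:
  assumes y: "y \<in> Jr" shows "\<exists>n. lpow sp y n = 0"
proof -
  obtain B where B: "finite B" "span B = UNIV" using fd unfolding fin_dim_def by blast
  obtain B' where B': "B' \<subseteq> B" "independent B'" "B \<subseteq> span B'"
    using maximal_independent_subset[of B] by blast
  have "span B \<subseteq> span B'" using B'(3) by (rule span_minimal) simp
  then have sB': "span B' = UNIV" using B(2) by auto
  interpret F: finite_dimensional_vector_space scale B'
    by unfold_locales (use B B' sB' finite_subset in auto)
  let ?p = "lpow sp y"
  have "\<exists>m. ?p m \<in> span (?p ` {m<..})"
  proof (rule ccontr)
    assume "\<not> ?thesis"
    then have step: "dim (?p ` {m..}) = dim (?p ` {Suc m..}) + 1" for m
    proof -
      assume h: "\<not> (\<exists>m. ?p m \<in> span (?p ` {m<..}))"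
      have "{m..} = insert m {Suc m..}" by auto
      then have e: "?p ` {m..} = insert (?p m) (?p ` {Suc m..})" by simp
      have ne: "?p m \<notin> span (?p ` {m<..})" using h by blast
      have "{m<..} = {Suc m..}" by auto
      then have "?p m \<notin> span (?p ` {Suc m..})" using ne by simp
      then show ?thesis unfolding e by (simp add: F.dim_insert)
    qed
    have "dim (?p ` {0..}) = dim (?p ` {n..}) + n" for n
    proof (induction n)
      case 0 then show ?case by simp
    next
      case (Suc n) then show ?case using step[of n] by simp
    qed
    then have "dim (?p ` {0..}) \<ge> F.dimension + 1" by (metis le_add2 add.commute)
    moreover have "dim (?p ` {0..}) \<le> F.dimension" by (rule F.dim_subset_UNIV)
    ultimately show False by simp
  qed
  then obtain m where m: "?p m \<in> span (?p ` {m<..})" by blast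
  have "span (?p ` {m<..}) \<subseteq> sp (?p m) ` Jr"
  proof (rule span_minimal)
    show "?p ` {m<..} \<subseteq> sp (?p m) ` Jr"
    proof
      fix u assume "u \<in> ?p ` {m<..}"
      then obtain k where k: "m < k" "u = ?p k" by auto
      have "u = sp (?p m) (?p (k - m - 1))" using k pw_mul[of y m "k - m - 1"] by simp
      then show "u \<in> sp (?p m) ` Jr" using pw_in[OF y] by blast
    qed
    show "subspace (sp (?p m) ` Jr)" by (rule module_hom.subspace_image[OF mh_sp J_sub])
  qed
  with m obtain w where w: "w \<in> Jr" "?p m = sp (?p m) w" by blast
  obtain z where z: "w + z - sp w z = 0" using J_qr[OF w(1)] unfolding quasi_regular_def by blast
  have "0 = sp (?p m) (w + z - sp w z)" using z by (simp add: sp_simps)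
  also have "\<dots> = sp (?p m) w + sp (?p m) z - sp (sp (?p m) w) z" by (simp add: sp_simps sp_assoc)
  also have "\<dots> = ?p m" using w(2)[symmetric] by simp
  finally have "?p m = 0" by simp
  then show ?thesis by blast
qed

lemma hom_span: assumes "module_hom scale scale f" "f ` S \<subseteq> span S"
  shows "f ` span S \<subseteq> span S"
proof -
  have "subspace (f -` span S)" by (rule module_hom.subspace_vimage[OF assms(1)]) simp
  moreover have "S \<subseteq> f -` span S" using assms(2) by auto
  ultimately have "span S \<subseteq> f -` span S" by (rule span_minimal[rotated])
  then show ?thesis by auto
qed

definition LL where "LL = span (\<Union>{I. lie_ideal scale br I \<and> I \<subseteq> Jr})"

lemma LL_lie: "lie_ideal scale br LL"
  unfolding lie_ideal_def
proof (intro conjI allI ballI)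
  show "subspace LL" unfolding LL_def by simp
  fix x a assume "a \<in> LL"
  have "br x ` (\<Union>{I. lie_ideal scale br I \<and> I \<subseteq> Jr}) \<subseteq> span (\<Union>{I. lie_ideal scale br I \<and> I \<subseteq> Jr})"
    unfolding lie_ideal_def by (auto intro!: span_base)
  from hom_span[OF mh_br this] \<open>a \<in> LL\<close> show "br x a \<in> LL" unfolding LL_def by blast
qed

lemma LL_J: "LL \<subseteq> Jr"
  unfolding LL_def by (rule span_minimal[OF _ J_sub]) blast

lemma LL_max: assumes "lie_ideal scale br I" "I \<subseteq> Jr" shows "I \<subseteq> LL"
proof -
  have "I \<subseteq> \<Union>{I. lie_ideal scale br I \<and> I \<subseteq> Jr}" using assms by blast
  also have "\<dots> \<subseteq> LL" unfolding LL_def by (rule span_superset)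
  finally show ?thesis .
qed

lemma LL_sp: "a \<in> LL \<Longrightarrow> sp x a \<in> LL"
proof -
  assume a: "a \<in> LL"
  let ?G = "LL \<union> {sp u b |u b. b \<in> LL}"
  have "lie_ideal scale br (span ?G)"
    unfolding lie_ideal_def
  proof (intro conjI allI ballI)
    show "subspace (span ?G)" by simp
    fix y v assume v: "v \<in> span ?G"
    have "br y ` ?G \<subseteq> span ?G"
    proof
      fix t assume "t \<in> br y ` ?G"
      then obtain g where g: "g \<in> ?G" "t = br y g" by blast
      show "t \<in> span ?G"
      proof (cases "g \<in> LL")
        case True
        then have "t \<in> LL" using g LL_lie unfolding lie_ideal_def by blast
        then show ?thesis by (auto intro: span_base)
      next
        case False
        then obtain u b where ub: "b \<in> LL" "g = sp u b" using g by blast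
        have "t = sp (br y u) b + sp u (br y b)" using g ub by (simp add: leibniz)
        moreover have "br y b \<in> LL" using ub LL_lie unfolding lie_ideal_def by blast
        ultimately show ?thesis using ub by (blast intro: span_add span_base)
      qed
    qed
    from hom_span[OF mh_br this] v show "br y v \<in> span ?G" by blast
  qed
  moreover have "span ?G \<subseteq> Jr"
    by (rule span_minimal) (use LL_J J_id J_sub in auto)
  ultimately have "span ?G \<subseteq> LL" by (rule LL_max)
  moreover have "sp x a \<in> span ?G" using a by (blast intro: span_base)
  ultimately show ?thesis by blast
qed

lemma result1: "largest_lie_ideal_in scale br Jr LL"
  unfolding largest_lie_ideal_in_def using LL_lie LL_J LL_max by simp

lemma sLL: "subspace LL" using LL_lie unfolding lie_ideal_def by (rule conjunct1)

lemma result2: "nil_ideal scale mult LL"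
  unfolding nil_ideal_def two_sided_ideal_def
proof (intro conjI allI ballI)
  show "subspace LL" by (rule sLL)
  fix x a assume a: "a \<in> LL"
  have 1: "sp x a \<in> LL" by (rule LL_sp[OF a])
  have 2: "br x a \<in> LL" using a LL_lie unfolding lie_ideal_def by simp
  have e1: "mult x a = sp x a + br x a" by (rule mult_decomp)
  have "mult a x = sp a x + br a x" by (rule mult_decomp)
  also have "\<dots> = sp x a + (- br x a)" by (simp only: sp_comm[of a x] br_anti[of a x])
  finally have e2: "mult a x = sp x a + (- br x a)" .
  show "mult x a \<in> LL" unfolding e1 by (rule subspace_add[OF sLL 1 2])
  show "mult a x \<in> LL" unfolding e2 by (rule subspace_add[OF sLL 1 subspace_neg[OF sLL 2]])
next
  fix a assume a: "a \<in> LL"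
  then have "a \<in> Jr" using LL_J by (rule subsetD[rotated])
  then obtain n where n: "lpow sp a n = 0" using fin_nil by blast
  have "lpow mult a n = 0" using pw_eq[of a n, THEN conjunct2] n by (rule trans)
  then show "nilpotent_elem mult a" unfolding nilpotent_elem_def by (rule exI)
qed

lemma result3: assumes I: "nil_ideal scale mult I" shows "I \<subseteq> LL"
proof -
  have sI: "subspace I" using I unfolding nil_ideal_def two_sided_ideal_def by simp
  have m: "mult x a \<in> I \<and> mult a x \<in> I" if "a \<in> I" for x a
    using I that unfolding nil_ideal_def two_sided_ideal_def by simp
  have spI: "sp x a \<in> I" if "a \<in> I" for x a
    unfolding sprod_def using m[OF that]
    by (intro subspace_scale[OF sI] subspace_add[OF sI]) simp_all
  have brI: "br x a \<in> I" if "a \<in> I" for x a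
    unfolding pbracket_def using m[OF that]
    by (intro subspace_scale[OF sI] subspace_diff[OF sI]) simp_all
  have qr: "quasi_regular sp a" if "a \<in> I" for a
  proof -
    have "nilpotent_elem mult a" using I that unfolding nil_ideal_def by simp
    then obtain n where n: "lpow mult a n = 0" unfolding nilpotent_elem_def by (rule exE)
    have "lpow sp a n = 0" using pw_eq[of a n, THEN conjunct2, symmetric] n by (rule trans)
    then show ?thesis by (rule nil_qr)
  qed
  have spI2: "sp a x \<in> I" if "a \<in> I" for x a by (subst sp_comm) (rule spI[OF that])
  have "qri I" unfolding qri_def two_sided_ideal_def using sI spI spI2 qr by simp
  then have "I \<subseteq> Jr" by (rule qri_sub)
  moreover have "lie_ideal scale br I" unfolding lie_ideal_def using sI brI by simp
  ultimately show "I \<subseteq> LL" using LL_max by simp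
qed

lemma result: "is_nilradical scale mult LL \<and> largest_lie_ideal_in scale br Jr LL"
  unfolding is_nilradical_def using result1 result2 result3 by simp

end

theorem mainTheorem8:
  fixes scale :: "'k::field \<Rightarrow> 'v::ab_group_add \<Rightarrow> 'v"
    and mult :: "'v \<Rightarrow> 'v \<Rightarrow> 'v"
  assumes char2: "(2::'k) \<noteq> 0" and char3: "(3::'k) \<noteq> 0"
    and vs: "vector_space scale"
    and fd: "fin_dim scale"
    and bil: "bilinear_prod scale mult"
    and adm: "admissible_poisson scale mult"
  shows "\<exists>N. is_nilradical scale mult N \<and>
    largest_lie_ideal_in scale (pbracket scale mult)
      (jacobson_radical scale (sprod scale mult)) N"
proof -
  interpret apa scale mult
    by (rule apa.intro[OF vs]) (unfold_locales; fact)
  show ?thesis using result by blast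
qed

end
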